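(* Let $d\ge1$, $\kappa>0$, and let $X_1,\dots,X_n$ be independent random vectors in $\mathbb{R}^d$, $X_i=(X_{i,j})_{j=1}^d$, with $\mathbb{E}X_i=0$ and $\|X_i\|_\infty\le\kappa$ almost surely. Let $\Gamma\ge\max_{1\le j\le d}\sum_{i=1}^n\mathrm{Var}(X_{i,j})$ and $S_n:=\sum_{i=1}^nX_i$. For $L>0$ let $\mathrm{e}(L):=\exp(1/L)-1-1/L$. Then for every $L>0$, $$\sqrt{\mathbb{E}\|S_n\|_\infty^2}\le \kappa L\log(2d)+\frac{\Gamma L\,\mathrm{e}(L)}{\kappa}.$$
   Context: $\|x\|_\infty:=\max_{1\le j\le d}|x_j|$; $\log$ is the natural logarithm. *)

theory Defs
  imports "HOL-Probability.Probability"
begin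

definition sup_norm :: "real ^ 'd \<Rightarrow> real" where
  "sup_norm x = Max (range (\<lambda>j. \<bar>x $ j\<bar>))"

definition e_fun :: "real \<Rightarrow> real" where
  "e_fun L = exp (1 / L) - 1 - 1 / L"

end

theory Submission
  imports Defs
begin


lemma exp_le_quad_neg:
  fixes u :: real assumes "u \<le> 0"
  shows "exp u \<le> 1 + u + u\<^sup>2 / 2"
proof -
  let ?f = "\<lambda>x::real. 1 + x + x\<^sup>2 / 2 - exp x"
  have "?f 0 \<le> ?f u"
  proof (rule DERIV_nonpos_imp_nonincreasing[OF assms])
    fix x :: real
    show "\<exists>y. DERIV ?f x :> y \<and> y \<le> 0"
      by (rule exI[of _ "1 + x - exp x"]) (auto intro!: derivative_eq_intros simp: exp_ge_add_one_self)
  qed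
  then show ?thesis by simp
qed

lemma exp_ge_quad_pos:
  fixes a :: real assumes "0 \<le> a"
  shows "a\<^sup>2 / 2 \<le> exp a - 1 - a"
proof -
  let ?f = "\<lambda>x::real. exp x - 1 - x - x\<^sup>2 / 2"
  have "?f 0 \<le> ?f a"
  proof (rule DERIV_nonneg_imp_nondecreasing[OF assms])
    fix x :: real
    show "\<exists>y. DERIV ?f x :> y \<and> y \<ge> 0"
    proof -
      have "DERIV ?f x :> exp x - 1 - x" by (auto intro!: derivative_eq_intros)
      moreover have "exp x - 1 - x \<ge> 0" using exp_ge_add_one_self[of x] by linarith
      ultimately show ?thesis by blast
    qed
  qed
  then show ?thesis by simp
qed

lemma exp_series_mono:
  fixes a u :: real assumes "0 < a" "0 \<le> u" "u \<le> a"
  shows "exp u - 1 - u \<le> u\<^sup>2 / a\<^sup>2 * (exp a - 1 - a)"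
proof -
  define T where "T x = (\<lambda>n. inverse (fact (n + 2)) * (x::real) ^ (n + 2))" for x
  have eq: "exp x - 1 - x = suminf (T x)" for x
    using exp_first_two_terms[of x] by (simp add: T_def)
  have sm: "summable (T x)" for x
  proof -
    have "summable (\<lambda>n. inverse (fact n) * x ^ n)"
      using summable_exp_generic[of x] by simp
    from summable_ignore_initial_segment[OF this, of 2] show ?thesis
      by (simp add: T_def)
  qed
  have "suminf (T u) \<le> suminf (\<lambda>n. u\<^sup>2 / a\<^sup>2 * T a n)"
  proof (rule suminf_le)
    fix n
    have "u ^ n \<le> a ^ n" using assms by (simp add: power_mono)
    then have "u\<^sup>2 * u ^ n \<le> u\<^sup>2 * a ^ n" by (simp add: mult_left_mono)
    moreover have "u\<^sup>2 / a\<^sup>2 * a ^ (n+2) = u\<^sup>2 * a ^ n"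
      using assms by (simp add: power_add field_simps power2_eq_square)
    moreover have "u ^ (n+2) = u\<^sup>2 * u ^ n" by (simp add: power_add power2_eq_square)
    ultimately have "u ^ (n+2) \<le> u\<^sup>2 / a\<^sup>2 * a ^ (n+2)" by linarith
    then have "inverse (fact (n+2)) * u ^ (n+2) \<le> inverse (fact (n+2)) * (u\<^sup>2 / a\<^sup>2 * a ^ (n+2))"
      by (rule mult_left_mono) simp
    then show "T u n \<le> u\<^sup>2 / a\<^sup>2 * T a n"
      unfolding T_def by (metis mult.left_commute)
  qed (auto intro: sm summable_mult)
  also have "\<dots> = u\<^sup>2 / a\<^sup>2 * suminf (T a)"
    by (rule suminf_mult[OF sm])
  finally show ?thesis by (simp add: eq)
qed

lemma bennett_pointwise:
  fixes a u :: real assumes "0 < a" "u \<le> a"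
  shows "exp u \<le> 1 + u + u\<^sup>2 * ((exp a - 1 - a) / a\<^sup>2)"
proof (cases "u \<le> 0")
  case True
  have "1/2 \<le> (exp a - 1 - a) / a\<^sup>2"
    using exp_ge_quad_pos[of a] assms by (simp add: field_simps)
  then have "u\<^sup>2 / 2 \<le> u\<^sup>2 * ((exp a - 1 - a) / a\<^sup>2)"
    by (metis mult_left_mono times_divide_eq_right mult_1_right zero_le_power2)
  with exp_le_quad_neg[OF True] show ?thesis by linarith
next
  case False
  with exp_series_mono[of a u] assms show ?thesis by (simp add: field_simps)
qed

lemma ln_sq_tangent:
  fixes A z :: real assumes "exp 1 \<le> A" "exp 1 \<le> z"
  shows "(ln z)\<^sup>2 \<le> (ln A)\<^sup>2 + 2 * ln A / A * (z - A)"
proof -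
  have A0: "A > 0" "z > 0" using assms exp_gt_zero[of 1] by linarith+
  have der: "DERIV (\<lambda>x. (ln x)\<^sup>2) x :> 2 * ln x / x" if "x > 0" for x :: real
    using that by (auto intro!: derivative_eq_intros simp: field_simps power2_eq_square)
  consider "z < A" | "z = A" | "A < z" by linarith
  then show ?thesis
  proof cases
    case 1
    obtain w where w: "z < w" "w < A" "(ln A)\<^sup>2 - (ln z)\<^sup>2 = (A - z) * (2 * ln w / w)"
      using MVT2[OF 1, of "\<lambda>x. (ln x)\<^sup>2" "\<lambda>x. 2 * ln x / x"] der A0 by force
    have "ln A / A \<le> ln w / w" using ln_x_over_x_mono[of w A] w assms by linarith
    then have "(A - z) * (2 * ln A / A) \<le> (A - z) * (2 * ln w / w)"
      using 1 by (intro mult_left_mono) auto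
    have "(ln z)\<^sup>2 = (ln A)\<^sup>2 - (A - z) * (2 * ln w / w)" using w by linarith
    also have "\<dots> \<le> (ln A)\<^sup>2 - (A - z) * (2 * ln A / A)" using \<open>(A - z) * (2 * ln A / A) \<le> _\<close> by linarith
    also have "\<dots> = (ln A)\<^sup>2 + 2 * ln A / A * (z - A)" by algebra
    finally show ?thesis .
  next
    case 2 then show ?thesis by simp
  next
    case 3
    obtain w where w: "A < w" "w < z" "(ln z)\<^sup>2 - (ln A)\<^sup>2 = (z - A) * (2 * ln w / w)"
      using MVT2[OF 3, of "\<lambda>x. (ln x)\<^sup>2" "\<lambda>x. 2 * ln x / x"] der A0 by force
    have "ln w / w \<le> ln A / A" using ln_x_over_x_mono[of A w] w assms by linarith
    then have "(z - A) * (2 * ln w / w) \<le> (z - A) * (2 * ln A / A)"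
      using 3 by (intro mult_left_mono) auto
    have "(ln z)\<^sup>2 = (ln A)\<^sup>2 + (z - A) * (2 * ln w / w)" using w by linarith
    also have "\<dots> \<le> (ln A)\<^sup>2 + (z - A) * (2 * ln A / A)" using \<open>(z - A) * (2 * ln w / w) \<le> _\<close> by linarith
    also have "\<dots> = (ln A)\<^sup>2 + 2 * ln A / A * (z - A)" by algebra
    finally show ?thesis .
  qed
qed



context prob_space
begin

lemma mgf_bound:
  fixes Y :: "nat \<Rightarrow> 'a \<Rightarrow> real" and I :: "nat set"
  assumes fin: "finite I" and ind: "indep_vars (\<lambda>_. borel) Y I"
    and bnd: "\<And>i. i \<in> I \<Longrightarrow> AE \<omega> in M. \<bar>Y i \<omega>\<bar> \<le> \<kappa>"
    and mean: "\<And>i. i \<in> I \<Longrightarrow> expectation (Y i) = 0"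
    and k: "\<kappa> > 0" and l: "l > 0"
  shows "expectation (\<lambda>\<omega>. exp (l * (\<Sum>i\<in>I. Y i \<omega>)))
     \<le> exp ((exp (l * \<kappa>) - 1 - l * \<kappa>) / \<kappa>\<^sup>2 * (\<Sum>i\<in>I. expectation (\<lambda>\<omega>. (Y i \<omega>)\<^sup>2)))"
proof -
  define c where "c = (exp (l * \<kappa>) - 1 - l * \<kappa>) / \<kappa>\<^sup>2"
  have "0 \<le> exp (l * \<kappa>) - 1 - l * \<kappa>" using exp_ge_add_one_self[of "l*\<kappa>"] by linarith
  then have c0: "c \<ge> 0" unfolding c_def by simp
  have rv[measurable]: "Y i \<in> borel_measurable M" if "i \<in> I" for i
    using ind that unfolding indep_vars_def by auto
  have intY: "integrable M (Y i)" if "i \<in> I" for i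
    by (rule integrable_const_bound[where B=\<kappa>]) (use bnd[OF that] that in auto)
  have intY2: "integrable M (\<lambda>\<omega>. (Y i \<omega>)\<^sup>2)" if "i \<in> I" for i
  proof (rule integrable_const_bound[where B="\<kappa>\<^sup>2"])
    show "AE x in M. norm ((Y i x)\<^sup>2) \<le> \<kappa>\<^sup>2"
      using bnd[OF that]
    proof eventually_elim
      case (elim x)
      have "\<bar>Y i x\<bar>\<^sup>2 \<le> \<kappa>\<^sup>2" using elim by (intro power_mono) auto
      then show ?case by simp
    qed
  qed (use that in auto)
  have intE: "integrable M (\<lambda>\<omega>. exp (l * Y i \<omega>))" if "i \<in> I" for i
  proof (rule integrable_const_bound[where B="exp (l * \<kappa>)"])
    show "AE x in M. norm (exp (l * Y i x)) \<le> exp (l * \<kappa>)"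
      using bnd[OF that] by eventually_elim (use l in auto)
  qed (use that in auto)
  have indE: "indep_vars (\<lambda>_. borel) (\<lambda>i \<omega>. exp (l * Y i \<omega>)) I"
    by (rule indep_vars_compose2[OF ind]) auto
  have "expectation (\<lambda>\<omega>. exp (l * (\<Sum>i\<in>I. Y i \<omega>))) = expectation (\<lambda>\<omega>. \<Prod>i\<in>I. exp (l * Y i \<omega>))"
    by (simp add: sum_distrib_left exp_sum fin)
  also have "\<dots> = (\<Prod>i\<in>I. expectation (\<lambda>\<omega>. exp (l * Y i \<omega>)))"
    by (rule indep_vars_lebesgue_integral[OF fin indE intE])
  also have "\<dots> \<le> (\<Prod>i\<in>I. exp (c * expectation (\<lambda>\<omega>. (Y i \<omega>)\<^sup>2)))"
  proof (rule prod_mono, safe)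
    fix i assume i: "i \<in> I"
    show "0 \<le> expectation (\<lambda>\<omega>. exp (l * Y i \<omega>))" by (rule integral_nonneg_AE) auto
    have "expectation (\<lambda>\<omega>. exp (l * Y i \<omega>)) \<le> expectation (\<lambda>\<omega>. 1 + l * Y i \<omega> + c * (Y i \<omega>)\<^sup>2)"
    proof (rule integral_mono_AE)
      show "integrable M (\<lambda>\<omega>. 1 + l * Y i \<omega> + c * (Y i \<omega>)\<^sup>2)"
        using intY[OF i] intY2[OF i] by auto
      show "AE \<omega> in M. exp (l * Y i \<omega>) \<le> 1 + l * Y i \<omega> + c * (Y i \<omega>)\<^sup>2"
        using bnd[OF i]
      proof eventually_elim
        case (elim \<omega>)
        have "l * Y i \<omega> \<le> l * \<kappa>" using elim l by (intro mult_left_mono) auto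
        from bennett_pointwise[OF _ this] k l
        have "exp (l * Y i \<omega>) \<le> 1 + l * Y i \<omega> + (l * Y i \<omega>)\<^sup>2 * ((exp (l * \<kappa>) - 1 - l * \<kappa>) / (l * \<kappa>)\<^sup>2)"
          by simp
        also have "(l * Y i \<omega>)\<^sup>2 * ((exp (l * \<kappa>) - 1 - l * \<kappa>) / (l * \<kappa>)\<^sup>2) = c * (Y i \<omega>)\<^sup>2"
          using k l by (simp add: c_def field_simps power2_eq_square)
        finally show ?case .
      qed
    qed (rule intE[OF i])
    also have "\<dots> = 1 + c * expectation (\<lambda>\<omega>. (Y i \<omega>)\<^sup>2)"
      using intY[OF i] intY2[OF i] mean[OF i] by (simp add: prob_space)
    also have "\<dots> \<le> exp (c * expectation (\<lambda>\<omega>. (Y i \<omega>)\<^sup>2))"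
      by (rule exp_ge_add_one_self[simplified add.commute])
    finally show "expectation (\<lambda>\<omega>. exp (l * Y i \<omega>)) \<le> exp (c * expectation (\<lambda>\<omega>. (Y i \<omega>)\<^sup>2))" .
  qed
  also have "\<dots> = exp (c * (\<Sum>i\<in>I. expectation (\<lambda>\<omega>. (Y i \<omega>)\<^sup>2)))"
    by (simp add: exp_sum fin sum_distrib_left)
  finally show ?thesis unfolding c_def .
qed


lemma mgf_integrable:
  fixes Y :: "nat \<Rightarrow> 'a \<Rightarrow> real" and I :: "nat set"
  assumes fin: "finite I" and ind: "indep_vars (\<lambda>_. borel) Y I"
    and bnd: "\<And>i. i \<in> I \<Longrightarrow> AE \<omega> in M. \<bar>Y i \<omega>\<bar> \<le> \<kappa>"
    and l: "l > 0"
  shows "integrable M (\<lambda>\<omega>. exp (l * (\<Sum>i\<in>I. Y i \<omega>)))"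
proof -
  have rv[measurable]: "Y i \<in> borel_measurable M" if "i \<in> I" for i
    using ind that unfolding indep_vars_def by auto
  have intE: "integrable M (\<lambda>\<omega>. exp (l * Y i \<omega>))" if "i \<in> I" for i
  proof (rule integrable_const_bound[where B="exp (l * \<kappa>)"])
    show "AE x in M. norm (exp (l * Y i x)) \<le> exp (l * \<kappa>)"
      using bnd[OF that] by eventually_elim (use l in auto)
  qed (use that in auto)
  have indE: "indep_vars (\<lambda>_. borel) (\<lambda>i \<omega>. exp (l * Y i \<omega>)) I"
    by (rule indep_vars_compose2[OF ind]) auto
  have "integrable M (\<lambda>\<omega>. \<Prod>i\<in>I. exp (l * Y i \<omega>))"
    by (rule indep_vars_integrable[OF fin indE intE])
  then show ?thesis by (simp add: sum_distrib_left exp_sum fin)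
qed

lemma second_moment:
  fixes Y :: "nat \<Rightarrow> 'a \<Rightarrow> real" and I :: "nat set"
  assumes fin: "finite I" and ind: "indep_vars (\<lambda>_. borel) Y I"
    and bnd: "\<And>i. i \<in> I \<Longrightarrow> AE \<omega> in M. \<bar>Y i \<omega>\<bar> \<le> \<kappa>"
    and mean: "\<And>i. i \<in> I \<Longrightarrow> expectation (Y i) = 0"
  shows "expectation (\<lambda>\<omega>. (\<Sum>i\<in>I. Y i \<omega>)\<^sup>2) = (\<Sum>i\<in>I. expectation (\<lambda>\<omega>. (Y i \<omega>)\<^sup>2))"
proof -
  have rv[measurable]: "Y i \<in> borel_measurable M" if "i \<in> I" for i
    using ind that unfolding indep_vars_def by auto
  have intY: "integrable M (Y i)" if "i \<in> I" for i
    by (rule integrable_const_bound[where B=\<kappa>]) (use bnd[OF that] that in auto)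
  have intP: "integrable M (\<lambda>\<omega>. Y i \<omega> * Y k \<omega>)" if "i \<in> I" "k \<in> I" for i k
  proof (rule integrable_const_bound[where B="\<kappa> * \<kappa>"])
    show "AE x in M. norm (Y i x * Y k x) \<le> \<kappa> * \<kappa>"
      using bnd[OF that(1)] bnd[OF that(2)] 
      by eventually_elim (auto simp: abs_mult intro: mult_mono)
  qed (use that in auto)
  have off: "expectation (\<lambda>\<omega>. Y i \<omega> * Y k \<omega>) = (if i = k then expectation (\<lambda>\<omega>. (Y i \<omega>)\<^sup>2) else 0)"
    if "i \<in> I" "k \<in> I" for i k
  proof (cases "i = k")
    case True then show ?thesis by (simp add: power2_eq_square)
  next
    case False
    have ind2: "indep_vars (\<lambda>_. borel) Y {i, k}"
      by (rule indep_vars_subset[OF ind]) (use that in auto)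
    have "expectation (\<lambda>\<omega>. \<Prod>l\<in>{i,k}. Y l \<omega>) = (\<Prod>l\<in>{i,k}. expectation (Y l))"
      by (rule indep_vars_lebesgue_integral[OF _ ind2]) (use that intY in auto)
    then show ?thesis using False mean that by simp
  qed
  have "(\<lambda>\<omega>. (\<Sum>i\<in>I. Y i \<omega>)\<^sup>2) = (\<lambda>\<omega>. \<Sum>i\<in>I. \<Sum>k\<in>I. Y i \<omega> * Y k \<omega>)"
    by (simp add: power2_eq_square sum_product)
  then have "expectation (\<lambda>\<omega>. (\<Sum>i\<in>I. Y i \<omega>)\<^sup>2) = (\<Sum>i\<in>I. \<Sum>k\<in>I. expectation (\<lambda>\<omega>. Y i \<omega> * Y k \<omega>))"
    using intP by (simp add: Bochner_Integration.integral_sum)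
  also have "\<dots> = (\<Sum>i\<in>I. \<Sum>k\<in>I. if i = k then expectation (\<lambda>\<omega>. (Y i \<omega>)\<^sup>2) else 0)"
    by (intro sum.cong refl off) 
  also have "\<dots> = (\<Sum>i\<in>I. expectation (\<lambda>\<omega>. (Y i \<omega>)\<^sup>2))"
    using fin by (simp add: sum.delta)
  finally show ?thesis .
qed

end

lemma sup_norm_ge: "\<bar>x $ j\<bar> \<le> sup_norm (x :: real ^ 'd)"
  unfolding sup_norm_def by (rule Max_ge) auto

lemma sup_norm_attained: "\<exists>j. sup_norm (x :: real ^ 'd) = \<bar>x $ j\<bar>"
proof -
  have "sup_norm x \<in> range (\<lambda>j. \<bar>x $ j\<bar>)"
    unfolding sup_norm_def by (rule Max_in) auto
  then show ?thesis by auto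
qed

lemma exp_cosh_ge: "2 \<le> exp (t::real) + exp (- t)"
  using exp_ge_add_one_self[of t] exp_ge_add_one_self[of "-t"] by linarith

lemma amgm_final:
  fixes \<kappa> L \<Gamma> :: real assumes "\<kappa> > 0" "L > 0" "\<Gamma> \<ge> 0"
  shows "sqrt \<Gamma> \<le> \<kappa> * L * ln 2 + \<Gamma> * L * e_fun L / \<kappa>"
proof -
  define a where "a = \<kappa> * L * ln 2"
  define b where "b = \<Gamma> * L * e_fun L / \<kappa>"
  have e: "(1/L)\<^sup>2 / 2 \<le> e_fun L"
    unfolding e_fun_def using exp_ge_quad_pos[of "1/L"] assms by simp
  then have e2: "1/2 \<le> L\<^sup>2 * e_fun L"
    using assms by (simp add: field_simps power2_eq_square)
  have ln2: "1/2 \<le> ln (2::real)" using ln2_ge_two_thirds by linarith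
  have a0: "a \<ge> 0" using assms ln2 by (simp add: a_def)
  have "0 \<le> e_fun L" using e zero_le_power2[of "1/L"] by linarith
  then have b0: "b \<ge> 0" using assms by (simp add: b_def)
  have "4 * a * b = 4 * ln 2 * \<Gamma> * (L\<^sup>2 * e_fun L)"
    using assms by (simp add: a_def b_def field_simps power2_eq_square)
  also have "\<dots> \<ge> 4 * (1/2) * \<Gamma> * (1/2)"
    using ln2 e2 assms by (intro mult_mono) auto
  finally have "\<Gamma> \<le> 4 * a * b" by simp
  also have "4 * a * b \<le> (a + b)\<^sup>2"
    using sum_squares_ge_zero[of "a - b" 0] by (simp add: power2_eq_square algebra_simps)
  finally have "sqrt \<Gamma> \<le> sqrt ((a + b)\<^sup>2)" by (rule real_sqrt_le_mono)
  also have "\<dots> = a + b" using a0 b0 by simp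
  finally show ?thesis unfolding a_def b_def .
qed

theorem lemma7:
  fixes M :: "'a measure" and X :: "nat \<Rightarrow> 'a \<Rightarrow> real ^ 'd"
    and n :: nat and \<kappa> \<Gamma> L :: real
  assumes "prob_space M"
    and "\<kappa> > 0"
    and "prob_space.indep_vars M (\<lambda>_. borel) X {1..n}"
    and "\<And>i. i \<in> {1..n} \<Longrightarrow> X i \<in> borel_measurable M"
    and "\<And>i. i \<in> {1..n} \<Longrightarrow> prob_space.expectation M (X i) = 0"
    and "\<And>i. i \<in> {1..n} \<Longrightarrow> (AE \<omega> in M. sup_norm (X i \<omega>) \<le> \<kappa>)"
    and "Max (range (\<lambda>j. \<Sum>i\<in>{1..n}. prob_space.variance M (\<lambda>\<omega>. X i \<omega> $ j))) \<le> \<Gamma>"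
    and "L > 0"
  shows "sqrt (prob_space.expectation M (\<lambda>\<omega>. (sup_norm (\<Sum>i\<in>{1..n}. X i \<omega>))\<^sup>2))
           \<le> \<kappa> * L * ln (2 * real CARD('d)) + \<Gamma> * L * e_fun L / \<kappa>"
proof -
  interpret prob_space M by (rule assms(1))
  define I where "I = {1..n}"
  have fin: "finite I" by (simp add: I_def)
  note k = assms(2) and L = assms(8)
  have measX[measurable]: "X i \<in> borel_measurable M" if "i \<in> I" for i
    using assms(4) that by (simp add: I_def)
  have indY: "indep_vars (\<lambda>_. borel) (\<lambda>i \<omega>. X i \<omega> $ j) I" for j
    using indep_vars_compose2[OF assms(3), of "\<lambda>i x. x $ j" "\<lambda>_. borel"] by (simp add: I_def)
  have indY': "indep_vars (\<lambda>_. borel) (\<lambda>i \<omega>. - (X i \<omega> $ j)) I" for j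
    using indep_vars_compose2[OF assms(3), of "\<lambda>i x. - (x $ j)" "\<lambda>_. borel"] by (simp add: I_def)
  have bndY: "AE \<omega> in M. \<bar>X i \<omega> $ j\<bar> \<le> \<kappa>" if "i \<in> I" for i j
    using assms(6)[of i] that unfolding I_def
    by (auto elim!: eventually_mono intro: order_trans[OF sup_norm_ge])
  have bndY': "AE \<omega> in M. \<bar>- (X i \<omega> $ j)\<bar> \<le> \<kappa>" if "i \<in> I" for i j
    using bndY[OF that, of j] by simp
  have intX: "integrable M (X i)" if "i \<in> I" for i
  proof (rule integrable_const_bound[where B="real CARD('d) * \<kappa>"])
    have "AE x in M. sup_norm (X i x) \<le> \<kappa>" using assms(6)[of i] that by (simp add: I_def)
    then show "AE x in M. norm (X i x) \<le> real CARD('d) * \<kappa>"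
    proof (rule eventually_mono)
      fix x assume "sup_norm (X i x) \<le> \<kappa>"
      then have "\<And>j. \<bar>X i x $ j\<bar> \<le> \<kappa>" using sup_norm_ge order_trans by blast
      then have "(\<Sum>j\<in>UNIV. \<bar>X i x $ j\<bar>) \<le> (\<Sum>j\<in>(UNIV::'d set). \<kappa>)"
        by (intro sum_mono) auto
      then show "norm (X i x) \<le> real CARD('d) * \<kappa>"
        using norm_le_l1_cart[of "X i x"] by simp
    qed
  qed (use that in auto)
  have meanY: "expectation (\<lambda>\<omega>. X i \<omega> $ j) = 0" if "i \<in> I" for i j
  proof -
    have "expectation (\<lambda>\<omega>. X i \<omega> $ j) = expectation (\<lambda>\<omega>. X i \<omega> \<bullet> axis j 1)"
      by (simp add: cart_eq_inner_axis)
    also have "\<dots> = expectation (X i) \<bullet> axis j 1"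
      using intX[OF that] by simp
    also have "\<dots> = 0" using assms(5)[of i] that by (simp add: I_def)
    finally show ?thesis .
  qed
  have meanY': "expectation (\<lambda>\<omega>. - (X i \<omega> $ j)) = 0" if "i \<in> I" for i j
    using meanY[OF that] by simp
  have varY: "(\<Sum>i\<in>I. expectation (\<lambda>\<omega>. (X i \<omega> $ j)\<^sup>2)) \<le> \<Gamma>" for j
  proof -
    have "(\<Sum>i\<in>I. expectation (\<lambda>\<omega>. (X i \<omega> $ j)\<^sup>2)) = (\<Sum>i\<in>I. variance (\<lambda>\<omega>. X i \<omega> $ j))"
      by (intro sum.cong refl) (simp add: meanY)
    also have "\<dots> \<le> Max (range (\<lambda>j. \<Sum>i\<in>{1..n}. variance (\<lambda>\<omega>. X i \<omega> $ j)))"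
      unfolding I_def by (rule Max_ge) auto
    also have "\<dots> \<le> \<Gamma>" by (rule assms(7))
    finally show ?thesis .
  qed
  have G0: "\<Gamma> \<ge> 0"
  proof -
    have "0 \<le> (\<Sum>i\<in>I. expectation (\<lambda>\<omega>. (X i \<omega> $ undefined)\<^sup>2))"
      by (intro sum_nonneg integral_nonneg_AE) auto
    then show ?thesis using varY[of undefined] by linarith
  qed
  have Scomp: "(\<Sum>i\<in>I. X i \<omega>) $ j = (\<Sum>i\<in>I. X i \<omega> $ j)" for \<omega> j
    by simp
  have "CARD('d) \<ge> 1" by (simp add: Suc_le_eq)
  then consider "CARD('d) = 1" | "CARD('d) \<ge> 2" by linarith
  then show ?thesis
  proof cases
    case 1
    then obtain j0 :: 'd where U: "(UNIV :: 'd set) = {j0}" by (rule card_1_singletonE)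
    have sn: "sup_norm x = \<bar>x $ j0\<bar>" for x :: "real ^ 'd"
      using sup_norm_attained[of x] U by (metis UNIV_I singletonD)
    have "expectation (\<lambda>\<omega>. (sup_norm (\<Sum>i\<in>I. X i \<omega>))\<^sup>2)
        = expectation (\<lambda>\<omega>. (\<Sum>i\<in>I. X i \<omega> $ j0)\<^sup>2)"
      by (simp add: sn)
    also have "\<dots> = (\<Sum>i\<in>I. expectation (\<lambda>\<omega>. (X i \<omega> $ j0)\<^sup>2))"
      by (rule second_moment[OF fin indY bndY meanY])
    also have "\<dots> \<le> \<Gamma>" by (rule varY)
    finally have "sqrt (expectation (\<lambda>\<omega>. (sup_norm (\<Sum>i\<in>I. X i \<omega>))\<^sup>2)) \<le> sqrt \<Gamma>"
      by (rule real_sqrt_le_mono)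
    also have "\<dots> \<le> \<kappa> * L * ln 2 + \<Gamma> * L * e_fun L / \<kappa>"
      by (rule amgm_final[OF k L G0])
    finally show ?thesis using 1 by (simp add: I_def)
  next
    case 2
    define l where "l = 1 / (\<kappa> * L)"
    have l0: "l > 0" using k L by (simp add: l_def)
    have lk: "l * \<kappa> = 1 / L" using k L by (simp add: l_def)
    define c where "c = (exp (l * \<kappa>) - 1 - l * \<kappa>) / \<kappa>\<^sup>2"
    have c_eq: "c = e_fun L / \<kappa>\<^sup>2" by (simp add: c_def lk e_fun_def)
    have "0 \<le> exp (l * \<kappa>) - 1 - l * \<kappa>" using exp_ge_add_one_self[of "l*\<kappa>"] by linarith
    then have c0: "c \<ge> 0" unfolding c_def by simp
    define d where "d = real CARD('d)"
    have d2: "d \<ge> 2" using 2 by (simp add: d_def)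
    define Ep where "Ep j \<omega> = exp (l * (\<Sum>i\<in>I. X i \<omega> $ j))" for j \<omega>
    define En where "En j \<omega> = exp (l * (\<Sum>i\<in>I. - (X i \<omega> $ j)))" for j \<omega>
    define Z where "Z \<omega> = (\<Sum>j\<in>UNIV. Ep j \<omega> + En j \<omega>)" for \<omega>
    have intEp: "integrable M (Ep j)" for j
      unfolding Ep_def by (rule mgf_integrable[OF fin indY bndY l0])
    have intEn: "integrable M (En j)" for j
      unfolding En_def by (rule mgf_integrable[OF fin indY' bndY' l0])
    have intZ: "integrable M Z"
      unfolding Z_def using intEp intEn by auto
    have bEp: "expectation (Ep j) \<le> exp (c * \<Gamma>)" for j
    proof -
      have "expectation (Ep j) \<le> exp (c * (\<Sum>i\<in>I. expectation (\<lambda>\<omega>. (X i \<omega> $ j)\<^sup>2)))"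
        unfolding Ep_def c_def by (rule mgf_bound[OF fin indY bndY meanY k l0])
      also have "\<dots> \<le> exp (c * \<Gamma>)" using varY[of j] c0 by (simp add: mult_left_mono)
      finally show ?thesis .
    qed
    have bEn: "expectation (En j) \<le> exp (c * \<Gamma>)" for j
    proof -
      have "expectation (En j) \<le> exp (c * (\<Sum>i\<in>I. expectation (\<lambda>\<omega>. (- (X i \<omega> $ j))\<^sup>2)))"
        unfolding En_def c_def by (rule mgf_bound[OF fin indY' bndY' meanY' k l0])
      also have "\<dots> \<le> exp (c * \<Gamma>)" using varY[of j] c0 by (simp add: mult_left_mono)
      finally show ?thesis .
    qed
    define A where "A = 2 * d * exp (c * \<Gamma>)"
    have EZ: "expectation Z \<le> A"
    proof -
      have "expectation Z = (\<Sum>j\<in>UNIV. expectation (Ep j) + expectation (En j))"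
        unfolding Z_def using intEp intEn by (simp add: Bochner_Integration.integral_sum)
      also have "\<dots> \<le> (\<Sum>j\<in>(UNIV::'d set). 2 * exp (c * \<Gamma>))"
      proof (rule sum_mono)
        fix j :: 'd
        show "expectation (Ep j) + expectation (En j) \<le> 2 * exp (c * \<Gamma>)"
          using bEp[of j] bEn[of j] by linarith
      qed
      also have "\<dots> = A" by (simp add: A_def d_def)
      finally show ?thesis .
    qed
    have Z2: "2 * d \<le> Z \<omega>" for \<omega>
    proof -
      have "(\<Sum>j\<in>(UNIV::'d set). 2) \<le> Z \<omega>"
        unfolding Z_def Ep_def En_def
        by (intro sum_mono) (simp add: sum_negf exp_cosh_ge)
      then show ?thesis by (simp add: d_def)
    qed
    have e4: "exp 1 \<le> (4::real)" using exp_bound[of 1] by simp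
    have Ze: "exp 1 \<le> Z \<omega>" for \<omega> using Z2[of \<omega>] d2 e4 by linarith
    have A1: "2 * d \<le> A" unfolding A_def using d2 c0 G0 by simp
    have Ae: "exp 1 \<le> A" using A1 d2 e4 by linarith
    have A_1: "1 \<le> A" using Ae exp_ge_add_one_self[of 1] by linarith
    then have lnA0: "0 \<le> ln A" by simp
    define kk where "kk = 2 * ln A / A"
    have kk0: "kk \<ge> 0" unfolding kk_def using lnA0 A_1 by simp
    have pw: "(sup_norm (\<Sum>i\<in>I. X i \<omega>))\<^sup>2 \<le> ((ln A)\<^sup>2 + kk * (Z \<omega> - A)) / l\<^sup>2" for \<omega>
    proof -
      obtain j where j: "sup_norm (\<Sum>i\<in>I. X i \<omega>) = \<bar>(\<Sum>i\<in>I. X i \<omega>) $ j\<bar>"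
        using sup_norm_attained by blast
      define s where "s = (\<Sum>i\<in>I. X i \<omega> $ j)"
      have sn: "sup_norm (\<Sum>i\<in>I. X i \<omega>) = \<bar>s\<bar>" using j by (simp add: s_def)
      have "exp (l * \<bar>s\<bar>) \<le> Ep j \<omega> + En j \<omega>"
        unfolding Ep_def En_def s_def[symmetric]
        by (cases "s \<ge> 0") (simp_all add: sum_negf s_def)
      also have "\<dots> \<le> Z \<omega>" unfolding Z_def
        by (rule member_le_sum) (auto simp: Ep_def En_def intro: add_nonneg_nonneg)
      finally have "l * \<bar>s\<bar> \<le> ln (Z \<omega>)"
        using Ze[of \<omega>] by (metis exp_gt_zero ln_exp ln_le_cancel_iff order_less_le_trans)
      then have "\<bar>s\<bar> \<le> ln (Z \<omega>) / l" using l0 by (simp add: field_simps)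
      then have "\<bar>s\<bar>\<^sup>2 \<le> (ln (Z \<omega>) / l)\<^sup>2" by (intro power_mono) auto
      also have "\<dots> = (ln (Z \<omega>))\<^sup>2 / l\<^sup>2" by (simp add: power_divide)
      also have "\<dots> \<le> ((ln A)\<^sup>2 + kk * (Z \<omega> - A)) / l\<^sup>2"
        using ln_sq_tangent[OF Ae Ze[of \<omega>]] l0 unfolding kk_def
        by (intro divide_right_mono) auto
      finally show ?thesis using sn by simp
    qed
    have "expectation (\<lambda>\<omega>. (sup_norm (\<Sum>i\<in>I. X i \<omega>))\<^sup>2)
          \<le> expectation (\<lambda>\<omega>. ((ln A)\<^sup>2 + kk * (Z \<omega> - A)) / l\<^sup>2)"
    proof (rule integral_mono_AE')
      show "integrable M (\<lambda>\<omega>. ((ln A)\<^sup>2 + kk * (Z \<omega> - A)) / l\<^sup>2)"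
        using intZ by auto
      show "AE \<omega> in M. (sup_norm (\<Sum>i\<in>I. X i \<omega>))\<^sup>2 \<le> ((ln A)\<^sup>2 + kk * (Z \<omega> - A)) / l\<^sup>2"
        by (rule AE_I2) (rule pw)
      show "AE \<omega> in M. 0 \<le> ((ln A)\<^sup>2 + kk * (Z \<omega> - A)) / l\<^sup>2"
        by (rule AE_I2) (rule order_trans[OF zero_le_power2 pw])
    qed
    also have "\<dots> = ((ln A)\<^sup>2 + kk * (expectation Z - A)) / l\<^sup>2"
      using intZ by (simp add: prob_space)
    also have "\<dots> \<le> (ln A)\<^sup>2 / l\<^sup>2"
      using EZ kk0 l0 by (intro divide_right_mono) (auto simp: mult_nonpos_nonneg mult_le_0_iff)
    also have "\<dots> = (ln A / l)\<^sup>2" by (simp add: power_divide)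
    finally have "sqrt (expectation (\<lambda>\<omega>. (sup_norm (\<Sum>i\<in>I. X i \<omega>))\<^sup>2)) \<le> sqrt ((ln A / l)\<^sup>2)"
      by (rule real_sqrt_le_mono)
    also have "\<dots> = ln A / l" using lnA0 l0 by simp
    also have "ln A = ln (2 * d) + c * \<Gamma>"
      unfolding A_def using d2 by (simp add: ln_mult)
    also have "(ln (2 * d) + c * \<Gamma>) / l = \<kappa> * L * ln (2 * d) + \<Gamma> * L * e_fun L / \<kappa>"
    proof -
      define q where "q = ln (2 * d)"
      define e where "e = e_fun L"
      have "(q + e / \<kappa>\<^sup>2 * \<Gamma>) / (1 / (\<kappa> * L)) = \<kappa> * L * q + \<Gamma> * L * e / \<kappa>"
        using k L by (simp add: field_simps power2_eq_square)
      then show ?thesis by (simp only: q_def e_def l_def c_eq)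
    qed
    finally show ?thesis unfolding I_def d_def .
  qed
qed

end
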